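(* Let $n$ be an odd positive integer and $p=\frac{n-1}{2}$. The $\mathrm{SU}(\frac{n+1}{2})\times\mathrm{SU}(\frac{n+1}{2})$-equivariant spectra of the harmonic maps $\psi_1$ and $\psi_{-1}$ are both equal to $\{\lambda_j=4j(j+n+2): j\in\mathbb Z_{\ge0}\}$.
   Context: $\mathbb{CP}^n$ carries the Fubini–Study metric (the metric making $\mathbb S^{2n+1}\to\mathbb{CP}^n$ a Riemannian submersion). $G=\mathrm{SU}(p+1)\times\mathrm{SU}(n-p)$ acts by $(A,B)\cdot[Z]=[\operatorname{diag}(A,B)Z]$; with $\gamma(t)=[\cos t\,e_1+\sin t\,e_{p+2}]$ every point is $g\cdot\gamma(t)$, $g\in G$, $t\in[0,\pi/2]$. For $\rho\ne0$ let $r_\rho(t)=\arctan(\rho\tan t)$ on $[0,\pi/2)$, $r_\rho(\pi/2)=\operatorname{sign}(\rho)\pi/2$, and $\psi_\rho(g\cdot\gamma(t))=g\cdot\gamma(r_\rho(t))$ (so $\psi_1=\mathrm{id}$ and $r_{-1}(t)=-t$). The equivariant spectrum of $\psi_\rho$ is the set of $\lambda\in\mathbb R$ for which \[ \ddot\xi+\big[(2n-2p-1)\cot t-(2p+1)\tan t\big]\dot\xi-\Big[2(n-p-1)\frac{\cos 2r_\rho(t)}{\sin^2t}-2p\frac{\cos2r_\rho(t)}{\cos^2t}+4\frac{\cos4r_\rho(t)}{\sin^22t}\Big]\xi+\lambda\xi=0 \] has a nonzero solution $\xi\in C^\infty_0([0,\tfrac\pi2])$ (smooth, vanishing at $0$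 and $\pi/2$). *)

theory Defs
  imports "HOL-Analysis.Analysis"
begin

definition r_fun :: "real \<Rightarrow> real \<Rightarrow> real" where
  "r_fun \<rho> t = (if t = pi/2 then sgn \<rho> * pi/2 else arctan (\<rho> * tan t))"

definition smooth_on_Icc :: "(real \<Rightarrow> real) \<Rightarrow> (nat \<Rightarrow> real \<Rightarrow> real) \<Rightarrow> bool" where
  "smooth_on_Icc \<xi> D \<longleftrightarrow> D 0 = \<xi> \<and>
     (\<forall>k. \<forall>t\<in>{0..pi/2}. (D k has_real_derivative D (Suc k) t) (at t within {0..pi/2}))"

text \<open>Equivariant spectrum of psi_rho on CP^n for the SU(p+1) x SU(n-p) action.\<close>
definition equivariant_spectrum :: "nat \<Rightarrow> nat \<Rightarrow> real \<Rightarrow> real set" where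
  "equivariant_spectrum n p \<rho> = {lam. \<exists>\<xi> D. smooth_on_Icc \<xi> D \<and>
      \<xi> 0 = 0 \<and> \<xi> (pi/2) = 0 \<and> (\<exists>t\<in>{0..pi/2}. \<xi> t \<noteq> 0) \<and>
      (\<forall>t\<in>{0<..<pi/2}.
         D 2 t + ((2 * real n - 2 * real p - 1) * cot t - (2 * real p + 1) * tan t) * D 1 t
         - (2 * (real n - real p - 1) * cos (2 * r_fun \<rho> t) / (sin t)\<^sup>2
            - 2 * real p * cos (2 * r_fun \<rho> t) / (cos t)\<^sup>2
            + 4 * cos (4 * r_fun \<rho> t) / (sin (2 * t))\<^sup>2) * \<xi> t
         + lam * \<xi> t = 0)}"

end

theory Submission
  imports Defs "HOL-Computational_Algebra.Polynomial"
begin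

definition pc :: "real poly \<times> real poly \<Rightarrow> real \<Rightarrow> real" where
  "pc PQ t = poly (fst PQ) (cos (2*t)) + sin (2*t) * poly (snd PQ) (cos (2*t))"

definition pd :: "real poly \<times> real poly \<Rightarrow> real poly \<times> real poly" where
  "pd PQ = (smult 2 (pCons 0 (snd PQ)) - smult 2 (pderiv (snd PQ) - pCons 0 (pCons 0 (pderiv (snd PQ)))),
            - smult 2 (pderiv (fst PQ)))"

lemma pc_deriv: "(pc PQ has_real_derivative pc (pd PQ) t) (at t)"
proof -
  obtain P Q where PQ: "PQ = (P,Q)" by (cases PQ)
  have "((\<lambda>t. poly P (cos (2*t)) + sin (2*t) * poly Q (cos (2*t))) has_real_derivative
     poly (pderiv P) (cos (2*t)) * (- sin (2*t) * 2) + (cos (2*t) * 2 * poly Q (cos (2*t))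
       + sin (2*t) * (poly (pderiv Q) (cos (2*t)) * (- sin (2*t) * 2)))) (at t)"
    by (auto intro!: derivative_eq_intros DERIV_chain2[OF poly_DERIV] simp: algebra_simps)
  moreover have "poly (pderiv P) (cos (2*t)) * (- sin (2*t) * 2) + (cos (2*t) * 2 * poly Q (cos (2*t))
       + sin (2*t) * (poly (pderiv Q) (cos (2*t)) * (- sin (2*t) * 2))) = pc (pd PQ) t"
  proof -
    have s: "(sin (2*t))^2 = 1 - (cos (2*t))^2" by (simp add: sin_squared_eq)
    have "poly (pderiv P) c * (- a * 2) + (c * 2 * poly Q c + a * (poly (pderiv Q) c * (- a * 2)))
       = poly (smult 2 (pCons 0 Q) - smult 2 (pderiv Q - pCons 0 (pCons 0 (pderiv Q)))) c + a * poly (- smult 2 (pderiv P)) c"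
      if "a*a + c*c = 1" for a c :: real
    proof -
      have h: "a*(a*X) + c*(c*X) = X" for X
      proof -
        have "(a*a+c*c)*X = X" using that by simp
        thus ?thesis by (simp add: algebra_simps)
      qed
      show ?thesis using h[of "2 * poly (pderiv Q) c"] by (simp add: algebra_simps)
    qed
    moreover have "sin (2*t) * sin (2*t) + cos (2*t) * cos (2*t) = 1"
      using sin_cos_squared_add3[of "2*t"] by linarith
    ultimately show ?thesis unfolding PQ pc_def pd_def by simp
  qed
  ultimately show ?thesis unfolding PQ pc_def by simp
qed

lemma pc_smooth: "smooth_on_Icc (pc PQ) (\<lambda>k. pc ((pd^^k) PQ))"
  unfolding smooth_on_Icc_def
  by (auto intro: has_field_derivative_at_within pc_deriv)

definition geg :: "nat \<Rightarrow> real \<Rightarrow> real poly \<Rightarrow> real poly" where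
  "geg n \<mu> G = pderiv (pderiv G) - pCons 0 (pCons 0 (pderiv (pderiv G)))
     - smult (real n + 3) (pCons 0 (pderiv G)) + smult \<mu> G"

lemma ode_pc:
  assumes "geg n \<mu> G = 0" and t: "0 < t" "t < pi/2"
  shows "pc ((pd^^2) (0,G)) t + 2 * real n * (cos (2*t) / sin (2*t)) * pc ((pd^^1) (0,G)) t
     - (4 * real n / (sin (2*t))^2 - 4 * (real n + 1)) * pc (0,G) t + 4 * \<mu> * pc (0,G) t = 0"
proof -
  have a0: "sin (2*t) \<noteq> 0"
  proof -
    have "0 < sin (2*t)" using t by (intro sin_gt_zero) auto
    thus ?thesis by simp
  qed
  have ac: "sin (2*t) * sin (2*t) + cos (2*t) * cos (2*t) = 1"
      using sin_cos_squared_add3[of "2*t"] by linarith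
  have g: "poly (geg n \<mu> G) (cos (2*t)) = 0" using assms(1) by simp
  have g': "poly (pderiv (pderiv G)) (cos (2*t)) - cos (2*t)*(cos (2*t)*poly (pderiv (pderiv G)) (cos (2*t))) - (real n + 3) * (cos (2*t) * poly (pderiv G) (cos (2*t))) + \<mu> * poly G (cos (2*t)) = 0"
    using g unfolding geg_def by (simp add: algebra_simps)
  have key: "\<And>a c::real. a \<noteq> 0 \<Longrightarrow> a*a + c*c = 1 \<Longrightarrow>
     poly (pderiv (pderiv G)) c - c*(c*poly (pderiv (pderiv G)) c) - (real n + 3) * (c * poly (pderiv G) c) + \<mu> * poly G c = 0 \<Longrightarrow>
     a * (-2 * (2 * (poly G c + c * poly (pderiv G) c) -
       2 * (poly (pderiv (pderiv G)) c - (2 * (c * poly (pderiv G) c) + c * (c * poly (pderiv (pderiv G)) c)))))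
     + 2 * real n * (c / a) * (2 * (c * poly G c) - 2 * (poly (pderiv G) c - c * (c * poly (pderiv G) c)))
     - (4 * real n / a^2 - 4 * (real n + 1)) * (a * poly G c) + 4 * \<mu> * (a * poly G c) = 0"
  proof -
    fix a c :: real
    assume a: "a \<noteq> 0" and ac: "a*a + c*c = 1" and ge: "poly (pderiv (pderiv G)) c - c*(c*poly (pderiv (pderiv G)) c) - (real n + 3) * (c * poly (pderiv G) c) + \<mu> * poly G c = 0"
    define G0 G1 G2 where "G0 = poly G c" "G1 = poly (pderiv G) c" "G2 = poly (pderiv (pderiv G)) c"
    have aa: "a*a = 1 - c*c" using ac by simp
    have aa': "a*(a*X) = X - c*(c*X)" for X using aa by (metis mult.assoc left_diff_distrib mult_1)
    have ge': "G2 - c*(c*G2) - (real n + 3) * (c * G1) + \<mu> * G0 = 0" using ge G0_G1_G2_def by simp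
    have "a * (-2 * (2 * (G0 + c * G1) - 2 * (G2 - (2 * (c * G1) + c * (c * G2)))))
     + 2 * real n * (c / a) * (2 * (c * G0) - 2 * (G1 - c * (c * G1)))
     - (4 * real n / a^2 - 4 * (real n + 1)) * (a * G0) + 4 * \<mu> * (a * G0)
     = (4 / a) * (a*a) * (G2 - c*(c*G2) - (real n + 3) * (c * G1) + \<mu> * G0)"
      using a by (simp add: field_simps power2_eq_square) (simp add: algebra_simps aa aa')
    then show "?thesis a c" using ge' unfolding G0_G1_G2_def by simp
  qed
  have h0: "pc (0,G) t = sin (2*t) * poly G (cos (2*t))" by (simp add: pc_def)
  have h1: "pc ((pd^^1) (0,G)) t = 2 * (cos (2*t) * poly G (cos (2*t))) - 2 * (poly (pderiv G) (cos (2*t)) - cos (2*t) * (cos (2*t) * poly (pderiv G) (cos (2*t))))"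
    by (simp add: pc_def pd_def)
  have h2: "pc ((pd^^2) (0,G)) t = sin (2*t) * (-2 * (2 * (poly G (cos (2*t)) + cos (2*t) * poly (pderiv G) (cos (2*t))) -
       2 * (poly (pderiv (pderiv G)) (cos (2*t)) - (2 * (cos (2*t) * poly (pderiv G) (cos (2*t))) + cos (2*t) * (cos (2*t) * poly (pderiv (pderiv G)) (cos (2*t)))))))"
    by (simp add: pc_def pd_def numeral_2_eq_2 pderiv_pCons pderiv_diff pderiv_smult algebra_simps)
  show ?thesis
    using key[OF a0 ac g'] unfolding h0 h1 h2 .
qed

fun cc :: "nat \<Rightarrow> nat \<Rightarrow> nat \<Rightarrow> real" where
  "cc n j 0 = (if even j then 1 else 0)"
| "cc n j (Suc 0) = (if odd j then 1 else 0)"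
| "cc n j (Suc (Suc k)) = (real k * (real k + real n + 2) - real j * (real j + real n + 2)) * cc n j k
      / ((real k + 2) * (real k + 1))"

lemma cc_odd: "odd (k + j) \<Longrightarrow> cc n j k = 0"
  by (induction n j k rule: cc.induct) auto

lemma cc_big: "j < k \<Longrightarrow> cc n j k = 0"
proof (induction n j k rule: cc.induct)
  case (3 n j k)
  show ?case
  proof (cases "odd (Suc (Suc k) + j)")
    case True thus ?thesis by (rule cc_odd)
  next
    case False
    show ?thesis
    proof (cases "k = j")
      case True thus ?thesis by simp
    next
      case False
      hence "j < k" using 3(2) \<open>\<not> odd (Suc (Suc k) + j)\<close> by presburger
      thus ?thesis using 3(1) by simp
    qed
  qed
qed auto

lemma cc_nz: "k \<le> j \<Longrightarrow> even (k + j) \<Longrightarrow> cc n j k \<noteq> 0"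
proof (induction n j k rule: cc.induct)
  case (3 n j k)
  have "k < j" using 3(2) by simp
  hence "real k * (real k + real n + 2) < real j * (real j + real n + 2)"
    by (intro mult_strict_mono) auto
  thus ?case using 3 by simp
qed auto

definition GG :: "nat \<Rightarrow> nat \<Rightarrow> real poly" where
  "GG n j = (\<Sum>k\<le>j. monom (cc n j k) k)"

lemma coeff_GG: "coeff (GG n j) m = cc n j m"
  unfolding GG_def by (auto simp: coeff_sum coeff_monom cc_big)

lemma poly_GG: "poly (GG n j) x = (\<Sum>k\<le>j. cc n j k * x ^ k)"
  unfolding GG_def by (simp add: poly_sum poly_monom)

lemma geg_GG: "geg n (real j * (real j + real n + 2)) (GG n j) = 0"
proof (rule poly_eqI)
  fix m
  show "coeff (geg n (real j * (real j + real n + 2)) (GG n j)) m = coeff 0 m"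
  proof (cases m)
    case 0
    then show ?thesis by (simp add: geg_def coeff_pderiv coeff_GG field_simps)
  next
    case (Suc m')
    show ?thesis
    proof (cases m')
      case 0
      then show ?thesis using Suc by (simp add: geg_def coeff_pderiv coeff_GG field_simps)
    next
      case (Suc k)
      have rec: "(real m + 2) * (real m + 1) * cc n j (Suc (Suc m)) = (real m * (real m + real n + 2) - real j * (real j + real n + 2)) * cc n j m"
        by simp
      have rec2: "(real k + 4) * (real k + 3) * cc n j (Suc (Suc (Suc (Suc k)))) = ((real k + 2) * (real k + 2 + real n + 2) - real j * (real j + real n + 2)) * cc n j (Suc (Suc k))"
        using rec unfolding \<open>m = Suc m'\<close> Suc by (simp add: algebra_simps del: cc.simps)
      show ?thesis using \<open>m = Suc m'\<close> Suc rec2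
        apply (simp add: geg_def coeff_pderiv coeff_GG del: cc.simps)
        apply (simp add: algebra_simps del: cc.simps)
        done
    qed
  qed
qed

lemma r_fun_pm1:
  assumes "0 < t" "t < pi/2" "\<rho> = 1 \<or> \<rho> = -1"
  shows "cos (2 * r_fun \<rho> t) = cos (2*t)" "cos (4 * r_fun \<rho> t) = cos (4*t)"
proof -
  have "t \<noteq> pi/2" using assms by simp
  have "r_fun \<rho> t = \<rho> * t" using assms(3)
  proof
    assume "\<rho> = 1" thus ?thesis using assms \<open>t \<noteq> pi/2\<close> by (simp add: r_fun_def arctan_tan)
  next
    assume "\<rho> = -1" thus ?thesis using assms \<open>t \<noteq> pi/2\<close> by (simp add: r_fun_def arctan_minus arctan_tan)
  qed
  thus "cos (2 * r_fun \<rho> t) = cos (2*t)" "cos (4 * r_fun \<rho> t) = cos (4*t)"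
    using assms(3) by auto
qed

lemma coef_conv:
  fixes N P :: real
  assumes "N = 2 * P + 1" "0 < t" "t < pi/2"
  shows "(2 * N - 2 * P - 1) * cot t - (2 * P + 1) * tan t = 2 * N * (cos (2*t) / sin (2*t))"
    and "2 * (N - P - 1) * cos (2*t) / (sin t)\<^sup>2 - 2 * P * cos (2*t) / (cos t)\<^sup>2
            + 4 * cos (4*t) / (sin (2 * t))\<^sup>2 = 4 * N / (sin (2*t))^2 - 4 * (N + 1)"
proof -
  have s0: "sin t > 0" using assms by (intro sin_gt_zero) auto
  have c0: "cos t > 0" using assms by (intro cos_gt_zero) auto
  have sc: "sin t ^ 2 + cos t ^ 2 = 1" by simp
  have c2: "cos (2*t) = cos t ^ 2 - sin t ^ 2" by (simp add: cos_double)
  have s2: "sin (2*t) = 2 * sin t * cos t" by (simp add: sin_double)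
  have c4: "cos (4*t) = 2 * (cos t ^ 2 - sin t ^ 2)^2 - 1"
  proof -
    have "cos (4*t) = 2 * cos (2*t) ^ 2 - 1" using cos_double_cos[of "2*t"] by simp
    thus ?thesis unfolding c2 .
  qed
  show "(2 * N - 2 * P - 1) * cot t - (2 * P + 1) * tan t = 2 * N * (cos (2*t) / sin (2*t))"
    unfolding c2 s2 cot_def tan_def using assms(1) s0 c0
    by (simp add: field_simps power2_eq_square)
  have gen: "2 * (N - P - 1) * (x^2 - y^2) / y\<^sup>2 - 2 * P * (x^2 - y^2) / x\<^sup>2
            + 4 * (2 * (x^2 - y^2)^2 - 1) / (2*y*x)\<^sup>2 = 4 * N / (2*y*x)^2 - 4 * (N + 1)"
    if "y > 0" "x > 0" "y^2 + x^2 = 1" for y x :: real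
  proof -
    have cc: "x*x = 1 - y*y" using that by (simp add: power2_eq_square)
    have cc': "x*(x*X) = X - y*(y*X)" for X using cc by (metis mult.assoc left_diff_distrib mult_1)
    show ?thesis using that assms(1)
      by (simp add: field_simps power2_eq_square) (simp add: algebra_simps cc cc')
  qed
  show "2 * (N - P - 1) * cos (2*t) / (sin t)\<^sup>2 - 2 * P * cos (2*t) / (cos t)\<^sup>2
            + 4 * cos (4*t) / (sin (2 * t))\<^sup>2 = 4 * N / (sin (2*t))^2 - 4 * (N + 1)"
    unfolding c2 s2 c4 using gen[OF s0 c0 sc] .
qed

definition ode0 :: "nat \<Rightarrow> real \<Rightarrow> real \<Rightarrow> real \<Rightarrow> real \<Rightarrow> real \<Rightarrow> bool" where
  "ode0 n lam b a v t \<longleftrightarrow> b + 2 * real n * (cos (2*t) / sin (2*t)) * a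
     - (4 * real n / (sin (2*t))^2 - 4 * (real n + 1)) * v + lam * v = 0"

lemma smooth_cont: "smooth_on_Icc \<xi> D \<Longrightarrow> continuous_on {0..pi/2} (D k)"
  unfolding smooth_on_Icc_def by (meson DERIV_continuous_on)

lemma smooth_deriv: "smooth_on_Icc \<xi> D \<Longrightarrow> t \<in> {0<..<pi/2} \<Longrightarrow> (D k has_real_derivative D (Suc k) t) (at t)"
proof -
  assume a: "smooth_on_Icc \<xi> D" "t \<in> {0<..<pi/2}"
  hence "(D k has_real_derivative D (Suc k) t) (at t within {0..pi/2})"
    unfolding smooth_on_Icc_def by auto
  moreover have "at t within {0..pi/2} = at t" using a(2) by (intro at_within_Icc_at) auto
  ultimately show ?thesis by simp
qed

lemma orth:
  assumes n: "n \<ge> 1" and sm: "smooth_on_Icc \<xi> D"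
    and ode: "\<forall>t\<in>{0<..<pi/2}. ode0 n lam (D 2 t) (D 1 t) (\<xi> t) t"
    and smf: "smooth_on_Icc \<phi> F"
    and odef: "\<forall>t\<in>{0<..<pi/2}. ode0 n lam' (F 2 t) (F 1 t) (\<phi> t) t"
    and ne: "lam \<noteq> lam'"
  shows "((\<lambda>t. sin (2*t)^n * \<xi> t * \<phi> t) has_integral 0) {0..pi/2}"
proof -
  obtain m where m: "n = Suc m" using n by (cases n) auto
  have D0: "D 0 = \<xi>" and F0: "F 0 = \<phi>" using sm smf unfolding smooth_on_Icc_def by auto
  define W where "W t = sin (2*t)^n * (D 1 t * F 0 t - D 0 t * F 1 t)" for t
  have contW: "continuous_on {0..pi/2} W"
    unfolding W_def using smooth_cont[OF sm] smooth_cont[OF smf]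
    by (intro continuous_intros) auto
  have derW: "(W has_vector_derivative ((lam' - lam) * (sin (2*t)^n * \<xi> t * \<phi> t))) (at t)"
    if t: "t \<in> {0<..<pi/2}" for t
  proof -
    have s0: "sin (2*t) > 0" using t by (intro sin_gt_zero) auto
    have "(W has_real_derivative
       sin (2*t)^n * (D 1 t * F 1 t + D 2 t * F 0 t - (D 0 t * F 2 t + D 1 t * F 1 t))
       + (real n * sin (2*t)^m * (cos (2*t) * 2)) * (D 1 t * F 0 t - D 0 t * F 1 t)) (at t)"
    proof -
      have hs: "((\<lambda>t. sin (2*t)^n) has_real_derivative real n * sin (2*t)^(n - 1) * (cos (2*t) * 2)) (at t)"
        by (auto intro!: derivative_eq_intros)
      have hs': "((\<lambda>t. sin (2*t)^n) has_real_derivative real n * sin (2*t)^m * (cos (2*t) * 2)) (at t)"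
        using hs m by simp
      have d0: "(D 0 has_real_derivative D 1 t) (at t)" using smooth_deriv[OF sm t, of 0] by simp
      have d1: "(D 1 has_real_derivative D 2 t) (at t)" using smooth_deriv[OF sm t, of 1] by (simp add: numeral_2_eq_2)
      have f0: "(F 0 has_real_derivative F 1 t) (at t)" using smooth_deriv[OF smf t, of 0] by simp
      have f1: "(F 1 has_real_derivative F 2 t) (at t)" using smooth_deriv[OF smf t, of 1] by (simp add: numeral_2_eq_2)
      show ?thesis unfolding W_def
        by (intro DERIV_mult'[OF hs'] DERIV_diff DERIV_mult' d0 d1 f0 f1)
    qed
    moreover have "sin (2*t)^n * (D 1 t * F 1 t + D 2 t * F 0 t - (D 0 t * F 2 t + D 1 t * F 1 t))
       + (real n * sin (2*t)^m * (cos (2*t) * 2)) * (D 1 t * F 0 t - D 0 t * F 1 t)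
       = (lam' - lam) * (sin (2*t)^n * \<xi> t * \<phi> t)"
    proof -
      have e1: "D 2 t = - 2 * real n * (cos (2*t) / sin (2*t)) * D 1 t
          + (4 * real n / (sin (2*t))^2 - 4 * (real n + 1)) * D 0 t - lam * D 0 t"
        using ode t D0 unfolding ode0_def by (auto simp: algebra_simps)
      have e2: "F 2 t = - 2 * real n * (cos (2*t) / sin (2*t)) * F 1 t
          + (4 * real n / (sin (2*t))^2 - 4 * (real n + 1)) * F 0 t - lam' * F 0 t"
        using odef t F0 unfolding ode0_def by (auto simp: algebra_simps)
      show ?thesis unfolding e1 e2 using s0 D0 F0 unfolding m
        by (simp add: field_simps)
    qed
    ultimately show ?thesis by (simp add: has_real_derivative_iff_has_vector_derivative)
  qed
  have "((\<lambda>t. (lam' - lam) * (sin (2*t)^n * \<xi> t * \<phi> t)) has_integral (W (pi/2) - W 0)) {0..pi/2}"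
    by (rule fundamental_theorem_of_calculus_interior[OF _ contW derW]) auto
  moreover have "W (pi/2) = 0" "W 0 = 0" unfolding W_def using m by auto
  ultimately have "((\<lambda>t. (lam' - lam) * (sin (2*t)^n * \<xi> t * \<phi> t)) has_integral 0) {0..pi/2}" by simp
  from has_integral_mult_right[OF this, of "1/(lam' - lam)"]
  show ?thesis using ne by simp
qed

lemma phi_props:
  shows "smooth_on_Icc (pc (0, GG n j)) (\<lambda>k. pc ((pd^^k) (0, GG n j)))"
    and "\<forall>t\<in>{0<..<pi/2}. ode0 n (4 * (real j * (real j + real n + 2)))
          (pc ((pd^^2) (0, GG n j)) t) (pc ((pd^^1) (0, GG n j)) t) (pc (0, GG n j) t) t"
  using pc_smooth ode_pc[OF geg_GG] unfolding ode0_def by auto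

lemma pc0: "pc (0, G) t = sin (2*t) * poly G (cos (2*t))"
  by (simp add: pc_def)

lemma moments:
  assumes n: "n \<ge> 1" and sm: "smooth_on_Icc \<xi> D"
    and ode: "\<forall>t\<in>{0<..<pi/2}. ode0 n lam (D 2 t) (D 1 t) (\<xi> t) t"
    and ne: "\<forall>j::nat. lam \<noteq> 4 * (real j * (real j + real n + 2))"
  shows "((\<lambda>t. (sin (2*t)^n * \<xi> t * sin (2*t)) * cos (2*t)^i) has_integral 0) {0..pi/2}"
proof (induction i rule: less_induct)
  case (less i)
  define h where "h t = sin (2*t)^n * \<xi> t * sin (2*t)" for t
  have o: "((\<lambda>t. sin (2*t)^n * \<xi> t * pc (0, GG n i) t) has_integral 0) {0..pi/2}"
    using orth[OF n sm ode phi_props(1)[of n i] phi_props(2)[of n i]] ne[rule_format, of i] by simp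
  have eq: "sin (2*t)^n * \<xi> t * pc (0, GG n i) t =
      (\<Sum>k<i. cc n i k * (h t * cos (2*t)^k)) + cc n i i * (h t * cos (2*t)^i)" for t
    unfolding pc0 poly_GG h_def lessThan_Suc_atMost[symmetric] sum.lessThan_Suc
    by (simp add: sum_distrib_left algebra_simps)
  have s: "((\<lambda>t. \<Sum>k<i. cc n i k * (h t * cos (2*t)^k)) has_integral (\<Sum>k<i. cc n i k * 0)) {0..pi/2}"
    by (intro has_integral_sum has_integral_mult_right) (use less h_def in auto)
  have "((\<lambda>t. cc n i i * (h t * cos (2*t)^i)) has_integral 0) {0..pi/2}"
    using has_integral_diff[OF o[unfolded eq] s] by simp
  from has_integral_mult_right[OF this, of "1 / cc n i i"]
  show ?case using cc_nz[of i i n] unfolding h_def by simp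
qed

lemma vanish:
  assumes n: "n \<ge> 1" and sm: "smooth_on_Icc \<xi> D"
    and ode: "\<forall>t\<in>{0<..<pi/2}. ode0 n lam (D 2 t) (D 1 t) (\<xi> t) t"
    and ne: "\<forall>j::nat. lam \<noteq> 4 * (real j * (real j + real n + 2))"
    and e0: "\<xi> 0 = 0" and e1: "\<xi> (pi/2) = 0"
    and t: "t \<in> {0..pi/2}"
  shows "\<xi> t = 0"
proof -
  have D0: "D 0 = \<xi>" using sm unfolding smooth_on_Icc_def by auto
  have cx: "continuous_on {0..pi/2} \<xi>" using smooth_cont[OF sm, of 0] D0 by simp
  define h where "h t = sin (2*t)^n * \<xi> t * sin (2*t)" for t
  define q where "q t = h t * \<xi> t" for t
  have ch: "continuous_on {0..pi/2} h" unfolding h_def using cx by (intro continuous_intros)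
  have cq: "continuous_on {0..pi/2} q" unfolding q_def using cx ch by (intro continuous_intros)
  have sin_nn: "0 \<le> sin (2*u)" if "u \<in> {0..pi/2}" for u using that by (intro sin_ge_zero) auto
  have qnn: "0 \<le> q u" if "u \<in> {0..pi/2}" for u
  proof -
    have "q u = sin (2*u)^n * sin (2*u) * (\<xi> u)^2" unfolding q_def h_def by (simp add: power2_eq_square)
    thus ?thesis using sin_nn[OF that] by simp
  qed
  obtain B where B: "B > 0" "\<forall>u\<in>{0..pi/2}. \<bar>\<xi> u\<bar> \<le> B"
  proof -
    have "compact (\<xi> ` {0..pi/2})" by (rule compact_continuous_image[OF cx]) simp
    then obtain b where "b > 0" "\<forall>x\<in>\<xi> ` {0..pi/2}. norm x \<le> b"
      using compact_imp_bounded bounded_pos by metis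
    thus ?thesis using that by auto
  qed
  have hB: "\<bar>h u\<bar> \<le> B" if "u \<in> {0..pi/2}" for u
  proof -
    have "\<bar>sin (2*u)^n\<bar> \<le> 1" unfolding power_abs by (rule power_le_one) auto
    moreover have "\<bar>sin (2*u)\<bar> \<le> 1" by simp
    ultimately have "\<bar>sin (2*u)^n * sin (2*u)\<bar> \<le> 1" by (simp add: abs_mult mult_le_one)
    hence "\<bar>sin (2*u)^n * sin (2*u)\<bar> * \<bar>\<xi> u\<bar> \<le> 1 * B"
      using B that by (intro mult_mono) auto
    thus ?thesis unfolding h_def by (simp add: abs_mult algebra_simps)
  qed
  define I where "I = integral {0..pi/2} q"
  have qI: "(q has_integral I) {0..pi/2}" unfolding I_def
    using integrable_continuous_real[OF cq] by (simp add: integrable_integral)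
  have I0: "I = 0"
  proof (rule ccontr)
    assume "I \<noteq> 0"
    moreover have "0 \<le> I" using has_integral_nonneg[OF qI qnn] .
    ultimately have Ipos: "I > 0" by simp
    define e where "e = I / (B * pi)"
    have epos: "e > 0" unfolding e_def using Ipos B by simp
    define f where "f x = \<xi> (arccos x / 2)" for x
    have cf: "continuous_on {-1..1} f"
    proof -
      have "continuous_on {-1..1} (\<lambda>x. arccos x / 2)"
        by (intro continuous_intros continuous_on_arccos') auto
      moreover have "(\<lambda>x. arccos x / 2) ` {-1..1} \<subseteq> {0..pi/2}"
        using arccos_lbound arccos_ubound by fastforce
      ultimately show ?thesis unfolding f_def
        using continuous_on_compose2[OF cx] by blast
    qed
    obtain g where g: "real_polynomial_function g" "\<And>x. x \<in> {-1..1} \<Longrightarrow> \<bar>f x - g x\<bar> < e"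
      using Stone_Weierstrass_real_polynomial_function[OF compact_Icc cf epos] by blast
    obtain a N where aN: "g = (\<lambda>x. \<Sum>i\<le>N. a i * x^i)"
      using g(1) real_polynomial_function_iff_sum by blast
    have gi: "((\<lambda>t. h t * g (cos (2*t))) has_integral 0) {0..pi/2}"
    proof -
      have "((\<lambda>t. \<Sum>i\<le>N. a i * (h t * cos (2*t)^i)) has_integral (\<Sum>i\<le>N. a i * 0)) {0..pi/2}"
        by (intro has_integral_sum has_integral_mult_right)
           (use moments[OF n sm ode ne] h_def in auto)
      thus ?thesis unfolding aN by (simp add: sum_distrib_left algebra_simps)
    qed
    have di: "((\<lambda>t. h t * (\<xi> t - g (cos (2*t)))) has_integral I) {0..pi/2}"
      using has_integral_diff[OF qI gi] unfolding q_def by (simp add: algebra_simps)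
    have pt: "norm (h u * (\<xi> u - g (cos (2*u)))) \<le> B * e" if u: "u \<in> cbox 0 (pi/2)" for u
    proof -
      have u': "u \<in> {0..pi/2}" using u by simp
      have "cos (2*u) \<in> {-1..1}" by simp
      moreover have "arccos (cos (2*u)) / 2 = u" using u' by (subst arccos_cos) auto
      ultimately have "\<bar>\<xi> u - g (cos (2*u))\<bar> < e" using g(2)[of "cos (2*u)"] unfolding f_def by simp
      hence "\<bar>h u\<bar> * \<bar>\<xi> u - g (cos (2*u))\<bar> \<le> B * e"
        using hB[OF u'] by (intro mult_mono) auto
      thus ?thesis by (simp add: abs_mult)
    qed
    have di': "((\<lambda>t. h t * (\<xi> t - g (cos (2*t)))) has_integral I) (cbox 0 (pi/2))"
      using di by simp
    have "I \<le> B * e * (pi/2)"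
      using has_integral_bound[OF _ di' pt] B epos Ipos by simp
    also have "\<dots> = I / 2" unfolding e_def using B by (simp add: field_simps)
    finally show False using Ipos by simp
  qed
  have qz: "q u = 0" if "u \<in> {0..pi/2}" for u
    by (rule has_integral_0_cbox_imp_0[of 0 "pi/2" q])
       (use cq qnn qI I0 that pi_ge_two in auto)
  show ?thesis
  proof (cases "t = 0 \<or> t = pi/2")
    case True thus ?thesis using e0 e1 by (metis nonzero_mult_div_cancel_right zero_neq_numeral)
  next
    case False
    hence "0 < t" "t < pi/2" using t by auto
    hence "sin (2*t) > 0" by (intro sin_gt_zero) auto
    moreover have "q t = sin (2*t)^n * sin (2*t) * (\<xi> t)^2" unfolding q_def h_def by (simp add: power2_eq_square)
    ultimately show ?thesis using qz[OF t] by simp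
  qed
qed

lemma GG_nz: "GG n j \<noteq> 0"
proof
  assume "GG n j = 0"
  hence "coeff (GG n j) j = 0" by simp
  thus False using cc_nz[of j j n] coeff_GG by simp
qed

lemma phi_nonzero: "\<exists>t\<in>{0..pi/2}. pc (0, GG n j) t \<noteq> 0"
proof (rule ccontr)
  assume "\<not> ?thesis"
  hence z: "\<forall>t\<in>{0..pi/2}. sin (2*t) * poly (GG n j) (cos (2*t)) = 0" by (simp add: pc0)
  have "{-1<..<1::real} \<subseteq> {x. poly (GG n j) x = 0}"
  proof
    fix x :: real assume x: "x \<in> {-1<..<1}"
    have b: "0 \<le> arccos x" "arccos x \<le> pi" using arccos_bounded[of x] x by auto
    have "sin (2 * (arccos x / 2)) * poly (GG n j) (cos (2 * (arccos x / 2))) = 0"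
      using z b by (intro bspec[OF z]) auto
    moreover have "sin (arccos x) \<noteq> 0" using sin_arccos_nonzero x by auto
    ultimately show "x \<in> {x. poly (GG n j) x = 0}" using x by simp
  qed
  moreover have "finite {x. poly (GG n j) x = 0}" by (rule poly_roots_finite[OF GG_nz])
  ultimately have "finite {-1<..<1::real}" by (rule finite_subset)
  thus False using infinite_Ioo[of "-1::real" 1] by simp
qed

lemma spec_eq:
  assumes "odd n" "p = (n - 1) div 2" "\<rho> = 1 \<or> \<rho> = -1"
  shows "equivariant_spectrum n p \<rho> = {4 * real j * (real j + real n + 2) | j. True}"
proof -
  have N: "real n = 2 * real p + 1" using assms(1,2) by (auto elim!: oddE)
  have n1: "n \<ge> 1" using assms(1) by (cases n) auto
  have conv: "(b + ((2 * real n - 2 * real p - 1) * cot t - (2 * real p + 1) * tan t) * a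
         - (2 * (real n - real p - 1) * cos (2 * r_fun \<rho> t) / (sin t)\<^sup>2
            - 2 * real p * cos (2 * r_fun \<rho> t) / (cos t)\<^sup>2
            + 4 * cos (4 * r_fun \<rho> t) / (sin (2 * t))\<^sup>2) * v
         + lam * v = 0) \<longleftrightarrow> ode0 n lam b a v t" if t: "t \<in> {0<..<pi/2}" for b a v lam t
  proof -
    have t': "0 < t" "t < pi/2" using t by auto
    show ?thesis unfolding ode0_def r_fun_pm1[OF t' assms(3)] coef_conv[OF N t'] ..
  qed
  have spec: "equivariant_spectrum n p \<rho> = {lam. \<exists>\<xi> D. smooth_on_Icc \<xi> D \<and>
      \<xi> 0 = 0 \<and> \<xi> (pi/2) = 0 \<and> (\<exists>t\<in>{0..pi/2}. \<xi> t \<noteq> 0) \<and>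
      (\<forall>t\<in>{0<..<pi/2}. ode0 n lam (D 2 t) (D 1 t) (\<xi> t) t)}"
    unfolding equivariant_spectrum_def using conv by (intro Collect_cong ex_cong1 conj_cong refl ball_cong) auto
  show ?thesis
  proof (intro set_eqI iffI)
    fix lam assume "lam \<in> equivariant_spectrum n p \<rho>"
    then obtain \<xi> D where sm: "smooth_on_Icc \<xi> D" and e: "\<xi> 0 = 0" "\<xi> (pi/2) = 0"
      and nz: "\<exists>t\<in>{0..pi/2}. \<xi> t \<noteq> 0" and ode: "\<forall>t\<in>{0<..<pi/2}. ode0 n lam (D 2 t) (D 1 t) (\<xi> t) t"
      unfolding spec by blast
    show "lam \<in> {4 * real j * (real j + real n + 2) | j. True}"
    proof (rule ccontr)
      assume "lam \<notin> {4 * real j * (real j + real n + 2) | j. True}"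
      hence ne: "\<forall>j::nat. lam \<noteq> 4 * (real j * (real j + real n + 2))" by (auto simp: mult.assoc)
      show False using vanish[OF n1 sm ode ne e] nz by blast
    qed
  next
    fix lam assume "lam \<in> {4 * real j * (real j + real n + 2) | j. True}"
    then obtain j where lj: "lam = 4 * (real j * (real j + real n + 2))" by (auto simp: mult.assoc)
    have "\<exists>\<xi> D. smooth_on_Icc \<xi> D \<and>
      \<xi> 0 = 0 \<and> \<xi> (pi/2) = 0 \<and> (\<exists>t\<in>{0..pi/2}. \<xi> t \<noteq> 0) \<and>
      (\<forall>t\<in>{0<..<pi/2}. ode0 n lam (D 2 t) (D 1 t) (\<xi> t) t)"
      apply (rule exI[of _ "pc (0, GG n j)"], rule exI[of _ "\<lambda>k. pc ((pd^^k) (0, GG n j))"])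
      using phi_props[of n j] phi_nonzero[of n j] lj by (simp add: pc0)
    thus "lam \<in> equivariant_spectrum n p \<rho>" unfolding spec by simp
  qed
qed

theorem theoremD:
  fixes n p :: nat
  assumes "odd n" and "p = (n - 1) div 2"
  shows "equivariant_spectrum n p 1 = {4 * real j * (real j + real n + 2) | j. True} \<and>
         equivariant_spectrum n p (-1) = {4 * real j * (real j + real n + 2) | j. True}"
  using spec_eq[OF assms, of 1] spec_eq[OF assms, of "-1"] by simp

end
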